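(* Let $\sigma_1,\sigma_2\subset\mathbb R^n$ be two $n$-dimensional simplices with $\sigma_1\cap\sigma_2=\tau$ a common facet. Let $\mathcal D:=\sigma_1^0\cup(\sigma_2\setminus\partial\tau)$ and $\overline{\mathcal D}:=\sigma_1\cup\sigma_2$. Then there exists a semialgebraic homeomorphism $\psi:\sigma_2\to\overline{\mathcal D}$ such that $\psi(\sigma_2\setminus\tau)=\mathcal D$ and $\psi$ restricted to $\partial\sigma_2\setminus\tau^0$ is the identity.
   Context: For a simplex $\rho$, $\rho^0$ denotes its relative interior and $\partial\rho=\rho\setminus\rho^0$ its relative boundary. A facet of an $n$-simplex is a face of dimension $n-1$. *)

theory Defs
  imports "HOL-Analysis.Analysis"
begin

inductive poly_fun :: "('a::euclidean_space \<Rightarrow> real) \<Rightarrow> bool" where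
  const: "poly_fun (\<lambda>x. c)"
| coord: "b \<in> Basis \<Longrightarrow> poly_fun (\<lambda>x. x \<bullet> b)"
| add: "poly_fun p \<Longrightarrow> poly_fun q \<Longrightarrow> poly_fun (\<lambda>x. p x + q x)"
| mult: "poly_fun p \<Longrightarrow> poly_fun q \<Longrightarrow> poly_fun (\<lambda>x. p x * q x)"

inductive semialgebraic :: "('a::euclidean_space) set \<Rightarrow> bool" where
  zero: "poly_fun p \<Longrightarrow> semialgebraic {x. p x = 0}"
| pos: "poly_fun p \<Longrightarrow> semialgebraic {x. 0 < p x}"
| union: "semialgebraic S \<Longrightarrow> semialgebraic T \<Longrightarrow> semialgebraic (S \<union> T)"
| compl: "semialgebraic S \<Longrightarrow> semialgebraic (UNIV - S)"

definition semialgebraic_map :: "('a::euclidean_space) set \<Rightarrow> ('a \<Rightarrow> 'b::euclidean_space) \<Rightarrow> bool" where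
  "semialgebraic_map S f \<longleftrightarrow> semialgebraic S \<and> semialgebraic ((\<lambda>x. (x, f x)) ` S)"

end

theory Submission
  imports Defs
begin

lemma aff_weights_unique:
  fixes S :: "'a::euclidean_space set"
  assumes "\<not> affine_dependent S" "finite S" "sum w S = 1" "sum w' S = 1"
    "(\<Sum>s\<in>S. w s *\<^sub>R s) = (\<Sum>s\<in>S. w' s *\<^sub>R s)" "s \<in> S"
  shows "w s = w' s"
proof (rule ccontr)
  assume ne: "w s \<noteq> w' s"
  have "sum (\<lambda>s. w s - w' s) S = 0" using assms by (simp add: sum_subtractf)
  moreover have "(\<Sum>s\<in>S. (w s - w' s) *\<^sub>R s) = 0"
    using assms(5) by (simp add: scaleR_left_diff_distrib sum_subtractf)
  ultimately have "affine_dependent S"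
    using affine_dependent_explicit_finite[OF assms(2)] ne assms(6) by (metis right_minus_eq)
  then show False using assms(1) by simp
qed

lemma hull_weights:
  fixes S :: "'a::euclidean_space set"
  assumes "\<not> affine_dependent S" "finite S" "sum w S = 1" "(\<Sum>s\<in>S. w s *\<^sub>R s) = x"
  shows "x \<in> convex hull S \<longleftrightarrow> (\<forall>s\<in>S. 0 \<le> w s)"
    and "x \<in> rel_interior (convex hull S) \<longleftrightarrow> (\<forall>s\<in>S. 0 < w s)"
proof -
  show "x \<in> convex hull S \<longleftrightarrow> (\<forall>s\<in>S. 0 \<le> w s)"
  proof
    assume "x \<in> convex hull S"
    then obtain w' where w': "\<forall>s\<in>S. 0 \<le> w' s" "sum w' S = 1" "(\<Sum>s\<in>S. w' s *\<^sub>R s) = x"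
      using convex_hull_finite[OF assms(2)] by auto
    show "\<forall>s\<in>S. 0 \<le> w s"
      using aff_weights_unique[OF assms(1,2,3) w'(2)] assms(4) w' by metis
  next
    assume "\<forall>s\<in>S. 0 \<le> w s"
    then show "x \<in> convex hull S" using convex_hull_finite[OF assms(2)] assms(3,4) by auto
  qed
  show "x \<in> rel_interior (convex hull S) \<longleftrightarrow> (\<forall>s\<in>S. 0 < w s)"
  proof
    assume "x \<in> rel_interior (convex hull S)"
    then obtain w' where w': "\<forall>s\<in>S. 0 < w' s" "sum w' S = 1" "(\<Sum>s\<in>S. w' s *\<^sub>R s) = x"
      using rel_interior_convex_hull_explicit[OF assms(1)] by auto
    show "\<forall>s\<in>S. 0 < w s"
      using aff_weights_unique[OF assms(1,2,3) w'(2)] assms(4) w' by metis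
  next
    assume "\<forall>s\<in>S. 0 < w s"
    then show "x \<in> rel_interior (convex hull S)" using rel_interior_convex_hull_explicit[OF assms(1)] assms(3,4) by auto
  qed
qed

locale cfg =
  fixes U :: "'a::euclidean_space set" and v1 v2 :: 'a
  assumes finU: "finite U" and cardU: "card U = DIM('a)" and v1U: "v1 \<notin> U" and v2U: "v2 \<notin> U"
    and ind1: "\<not> affine_dependent (insert v1 U)" and ind2: "\<not> affine_dependent (insert v2 U)"
begin

lemma exists_coords: "\<exists>c. \<forall>z. z = (\<Sum>u\<in>U. (z \<bullet> c u) *\<^sub>R (u - v1))"
proof -
  define V where "V = (\<lambda>u. u - v1) ` U"
  have injV: "inj_on (\<lambda>u. u - v1) U" by (auto simp: inj_on_def)
  have "V = (+) (- v1) ` U" unfolding V_def by auto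
  then have indV: "independent V" using ind1 v1U affine_dependent_iff_dependent by metis
  have finV: "finite V" using finU V_def by auto
  have "card V = card U" unfolding V_def using card_image[OF injV] by simp
  then have "card V = dim (UNIV::'a set)" using cardU by simp
  then have spV: "span V = UNIV" using card_eq_dim[of V UNIV] indV finV by auto
  define c where "c u = (\<Sum>b\<in>Basis. representation V b (u - v1) *\<^sub>R b)" for u
  have lin: "representation V z b = z \<bullet> (\<Sum>b'\<in>Basis. representation V b' b *\<^sub>R b')" for z b
  proof -
    have "representation V z b = representation V (\<Sum>b'\<in>Basis. (z \<bullet> b') *\<^sub>R b') b"
      by (simp add: euclidean_representation)
    also have "\<dots> = (\<Sum>b'\<in>Basis. (z \<bullet> b') * representation V b' b)"
      using indV spV by (simp add: real_vector.representation_sum real_vector.representation_scale)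
    also have "\<dots> = z \<bullet> (\<Sum>b'\<in>Basis. representation V b' b *\<^sub>R b')"
      by (simp add: inner_sum_right mult.commute)
    finally show ?thesis .
  qed
  have "z = (\<Sum>u\<in>U. (z \<bullet> c u) *\<^sub>R (u - v1))" for z
  proof -
    have "z = (\<Sum>b\<in>V. representation V z b *\<^sub>R b)"
      using real_vector.sum_representation_eq[OF indV _ finV] spV by auto
    also have "\<dots> = (\<Sum>u\<in>U. representation V z (u - v1) *\<^sub>R (u - v1))"
      unfolding V_def by (simp add: sum.reindex[OF injV])
    also have "\<dots> = (\<Sum>u\<in>U. (z \<bullet> c u) *\<^sub>R (u - v1))"
      using lin[of z] unfolding c_def by simp
    finally show ?thesis .
  qed
  then show ?thesis by blast
qed

definition "cc = (SOME c. \<forall>z. z = (\<Sum>u\<in>U. (z \<bullet> c u) *\<^sub>R (u - v1)))"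
definition "r u x = (x - v1) \<bullet> cc u"

lemma recon: "x = v1 + (\<Sum>u\<in>U. r u x *\<^sub>R (u - v1))"
proof -
  have "\<forall>z. z = (\<Sum>u\<in>U. (z \<bullet> cc u) *\<^sub>R (u - v1))"
    unfolding cc_def using someI_ex[OF exists_coords] by blast
  then have "x - v1 = (\<Sum>u\<in>U. r u x *\<^sub>R (u - v1))" unfolding r_def by blast
  then show ?thesis by (metis add.commute diff_add_cancel)
qed

lemma uniq:
  assumes "x = v1 + (\<Sum>u\<in>U. f u *\<^sub>R (u - v1))" "u \<in> U"
  shows "f u = r u x"
proof -
  let ?S = "insert v1 U"
  define w where "w s = (if s = v1 then 1 - sum f U else f s)" for s
  define w' where "w' s = (if s = v1 then 1 - (\<Sum>u\<in>U. r u x) else r s x)" for s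
  have fin: "finite ?S" using finU by simp
  have sw: "sum w ?S = 1" "sum w' ?S = 1"
    using v1U finU unfolding w_def w'_def by (auto simp: sum.insert intro!: sum.cong)
  have sw1: "sum w U = sum f U" "sum w' U = (\<Sum>u\<in>U. r u x)"
    using v1U unfolding w_def w'_def by (auto intro!: sum.cong)
  have vec: "(\<Sum>s\<in>?S. g s *\<^sub>R s) = v1 + (\<Sum>u\<in>U. g u *\<^sub>R (u - v1))" if "g v1 = 1 - sum g U" for g
  proof -
    have "(\<Sum>s\<in>?S. g s *\<^sub>R s) = g v1 *\<^sub>R v1 + (\<Sum>u\<in>U. g u *\<^sub>R u)"
      using v1U finU by (simp add: sum.insert)
    also have "\<dots> = v1 + (\<Sum>u\<in>U. g u *\<^sub>R (u - v1))"
    proof -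
      have "(\<Sum>u\<in>U. g u *\<^sub>R (u - v1)) = (\<Sum>u\<in>U. g u *\<^sub>R u) - sum g U *\<^sub>R v1"
        by (simp add: scaleR_diff_right sum_subtractf scaleR_sum_left)
      then show ?thesis using that by (simp add: scaleR_diff_left)
    qed
    finally show ?thesis .
  qed
  have "(\<Sum>s\<in>?S. w s *\<^sub>R s) = (\<Sum>s\<in>?S. w' s *\<^sub>R s)"
  proof -
    have "(\<Sum>s\<in>?S. w s *\<^sub>R s) = v1 + (\<Sum>u\<in>U. w u *\<^sub>R (u - v1))"
      by (rule vec) (use sw1 in \<open>simp add: w_def\<close>)
    also have "\<dots> = v1 + (\<Sum>u\<in>U. f u *\<^sub>R (u - v1))"
      using v1U unfolding w_def by (auto intro!: sum.cong)
    also have "\<dots> = x" using assms(1) by simp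
    also have "\<dots> = v1 + (\<Sum>u\<in>U. r u x *\<^sub>R (u - v1))" by (rule recon)
    also have "\<dots> = v1 + (\<Sum>u\<in>U. w' u *\<^sub>R (u - v1))"
      using v1U unfolding w'_def by (auto intro!: sum.cong)
    also have "\<dots> = (\<Sum>s\<in>?S. w' s *\<^sub>R s)"
      by (rule vec[symmetric]) (use sw1 in \<open>simp add: w'_def\<close>)
    finally show ?thesis .
  qed
  then have "w u = w' u" using aff_weights_unique[OF ind1 fin sw] assms(2) by blast
  then show ?thesis using assms(2) v1U unfolding w_def w'_def by (auto split: if_splits)
qed

end

lemma shift_sum:
  assumes "sum w S = 1"
  shows "(\<Sum>s\<in>S. w s *\<^sub>R s) = (a::'a::real_vector) + (\<Sum>s\<in>S. w s *\<^sub>R (s - a))"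
proof -
  have "(\<Sum>s\<in>S. w s *\<^sub>R (s - a)) = (\<Sum>s\<in>S. w s *\<^sub>R s) - sum w S *\<^sub>R a"
    unfolding scaleR_right_diff_distrib sum_subtractf scaleR_sum_left ..
  then show ?thesis using assms by simp
qed

context cfg begin

definition "bb x = 1 - (\<Sum>u\<in>U. r u x)"
definition "nn = real (card U)"
definition "gam u = r u v2"
definition "dl = bb v2"
definition "yy u x = r u x + bb x / nn"
definition "ss x = - bb x"
definition "hh u = - gam u / dl - 1 / nn"
definition "PP = {u\<in>U. 0 < hh u}"
definition "pp = (1/nn) *\<^sub>R (\<Sum>u\<in>U. u)"
definition "w0 = v1 - pp"
definition "aa u x = r u x - bb x / dl * gam u"
definition "L1 x = nn * Min ((\<lambda>u. yy u x) ` U)"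
definition "L2 x = Min ((\<lambda>u. yy u x / hh u) ` PP)"
definition "Dl x = max 0 (L1 x) * (L2 x - ss x) / L2 x"
definition "psi x = x + Dl x *\<^sub>R w0"

lemma Une: "U \<noteq> {}" using cardU finU by (metis DIM_positive card.empty less_irrefl)
lemma nn_pos: "nn > 0" unfolding nn_def using cardU by simp

lemma r_pp: "u \<in> U \<Longrightarrow> r u pp = 1 / nn"
proof -
  assume u: "u \<in> U"
  have "(\<Sum>u\<in>U. (1/nn) *\<^sub>R (u - v1)) = pp - v1"
    unfolding pp_def using nn_pos
    by (simp add: scaleR_diff_right sum_subtractf scaleR_sum_right nn_def sum_constant_scaleR)
  then have "pp = v1 + (\<Sum>u\<in>U. (1/nn) *\<^sub>R (u - v1))" by simp
  from uniq[OF this u] show ?thesis by simp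
qed

lemma r_add: "r u (x + z) = r u x + z \<bullet> cc u" unfolding r_def by (simp add: inner_simps)

lemma r_shift: "u \<in> U \<Longrightarrow> r u (x + t *\<^sub>R w0) = r u x - t / nn"
proof -
  assume u: "u \<in> U"
  have "w0 \<bullet> cc u = - r u pp" unfolding w0_def r_def by (simp add: inner_simps)
  then show ?thesis using r_pp[OF u] by (simp add: r_add)
qed

lemma bb_shift: "bb (x + t *\<^sub>R w0) = bb x + t"
proof -
  have "(\<Sum>u\<in>U. r u (x + t *\<^sub>R w0)) = (\<Sum>u\<in>U. r u x) - (\<Sum>u\<in>U. t / nn)"
    by (simp add: r_shift sum_subtractf)
  also have "(\<Sum>u\<in>U. t / nn) = t" using nn_pos by (simp add: nn_def)
  finally show ?thesis unfolding bb_def by simp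
qed

lemma yy_shift: "u \<in> U \<Longrightarrow> yy u (x + t *\<^sub>R w0) = yy u x"
  unfolding yy_def using nn_pos by (simp add: r_shift bb_shift field_simps)

lemma ss_shift: "ss (x + t *\<^sub>R w0) = ss x - t"
  unfolding ss_def by (simp add: bb_shift)

lemma dl_ne: "dl \<noteq> 0"
proof
  assume "dl = 0"
  then have s1: "sum gam U = 1" unfolding dl_def bb_def gam_def by simp
  have "v2 = v1 + (\<Sum>u\<in>U. gam u *\<^sub>R (u - v1))" unfolding gam_def by (rule recon)
  also have "\<dots> = (\<Sum>u\<in>U. gam u *\<^sub>R u)" using shift_sum[OF s1, of v1] by simp
  finally have "v2 \<in> affine hull U" using affine_hull_finite[OF finU] s1 by auto
  then have "v2 \<in> affine hull (insert v2 U - {v2})" using v2U by simp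
  then have "affine_dependent (insert v2 U)" unfolding affine_dependent_def by blast
  then show False using ind2 by simp
qed

lemma S1_char:
  shows "x \<in> convex hull (insert v1 U) \<longleftrightarrow> (\<forall>u\<in>U. 0 \<le> r u x) \<and> 0 \<le> bb x"
    and "x \<in> rel_interior (convex hull (insert v1 U)) \<longleftrightarrow> (\<forall>u\<in>U. 0 < r u x) \<and> 0 < bb x"
proof -
  define w where "w s = (if s = v1 then bb x else r s x)" for s
  have swU: "sum w U = (\<Sum>u\<in>U. r u x)" using v1U unfolding w_def by (auto intro!: sum.cong)
  have sw: "sum w (insert v1 U) = 1" using v1U finU swU by (simp add: w_def bb_def)
  have "(\<Sum>s\<in>insert v1 U. w s *\<^sub>R s) = v1 + (\<Sum>s\<in>insert v1 U. w s *\<^sub>R (s - v1))"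
    by (rule shift_sum[OF sw])
  also have "\<dots> = v1 + (\<Sum>u\<in>U. w u *\<^sub>R (u - v1))"
    using v1U finU by simp
  also have "\<dots> = v1 + (\<Sum>u\<in>U. r u x *\<^sub>R (u - v1))"
    using v1U by (auto simp: w_def intro!: sum.cong)
  also have "\<dots> = x" by (rule recon[symmetric])
  finally have vx: "(\<Sum>s\<in>insert v1 U. w s *\<^sub>R s) = x" .
  have fin: "finite (insert v1 U)" using finU by simp
  show "x \<in> convex hull (insert v1 U) \<longleftrightarrow> (\<forall>u\<in>U. 0 \<le> r u x) \<and> 0 \<le> bb x"
    using hull_weights(1)[OF ind1 fin sw vx] v1U by (auto simp: w_def)
  show "x \<in> rel_interior (convex hull (insert v1 U)) \<longleftrightarrow> (\<forall>u\<in>U. 0 < r u x) \<and> 0 < bb x"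
    using hull_weights(2)[OF ind1 fin sw vx] v1U by (auto simp: w_def)
qed


abbreviation "S1 \<equiv> convex hull (insert v1 U)"
abbreviation "S2 \<equiv> convex hull (insert v2 U)"
abbreviation "TT \<equiv> convex hull U"

lemma sumgam: "sum gam U = 1 - dl" unfolding dl_def bb_def gam_def by simp

lemma S2_char:
  shows "x \<in> S2 \<longleftrightarrow> (\<forall>u\<in>U. 0 \<le> aa u x) \<and> 0 \<le> bb x / dl"
    and "x \<in> rel_interior S2 \<longleftrightarrow> (\<forall>u\<in>U. 0 < aa u x) \<and> 0 < bb x / dl"
proof -
  define w where "w s = (if s = v2 then bb x / dl else aa s x)" for s
  have swU: "sum w U = (\<Sum>u\<in>U. aa u x)" using v2U unfolding w_def by (auto intro!: sum.cong)
  have "(\<Sum>u\<in>U. aa u x) = (\<Sum>u\<in>U. r u x) - bb x / dl * sum gam U"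
    unfolding aa_def by (simp add: sum_subtractf sum_distrib_left)
  then have "(\<Sum>u\<in>U. aa u x) = 1 - bb x - bb x / dl * (1 - dl)"
    by (simp add: sumgam bb_def)
  then have sw: "sum w (insert v2 U) = 1" using v2U finU swU dl_ne
    by (simp add: w_def field_simps)
  have v2e: "v2 - v1 = (\<Sum>u\<in>U. gam u *\<^sub>R (u - v1))" using recon[of v2] unfolding gam_def
    by (metis add_diff_cancel_left')
  have "(\<Sum>s\<in>insert v2 U. w s *\<^sub>R s) = v1 + (\<Sum>s\<in>insert v2 U. w s *\<^sub>R (s - v1))"
    by (rule shift_sum[OF sw])
  also have "\<dots> = v1 + ((bb x / dl) *\<^sub>R (v2 - v1) + (\<Sum>u\<in>U. w u *\<^sub>R (u - v1)))"
    using v2U finU by (simp add: w_def)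
  also have "(\<Sum>u\<in>U. w u *\<^sub>R (u - v1)) = (\<Sum>u\<in>U. aa u x *\<^sub>R (u - v1))"
    using v2U by (auto simp: w_def intro!: sum.cong)
  also have "(bb x / dl) *\<^sub>R (v2 - v1) = (\<Sum>u\<in>U. (bb x / dl * gam u) *\<^sub>R (u - v1))"
    unfolding v2e by (simp add: scaleR_sum_right)
  also have "(\<Sum>u\<in>U. (bb x / dl * gam u) *\<^sub>R (u - v1)) + (\<Sum>u\<in>U. aa u x *\<^sub>R (u - v1))
      = (\<Sum>u\<in>U. r u x *\<^sub>R (u - v1))"
    unfolding sum.distrib[symmetric] scaleR_add_left[symmetric] by (simp add: aa_def)
  also have "v1 + (\<Sum>u\<in>U. r u x *\<^sub>R (u - v1)) = x" by (rule recon[symmetric])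
  finally have vx: "(\<Sum>s\<in>insert v2 U. w s *\<^sub>R s) = x" .
  have fin: "finite (insert v2 U)" using finU by simp
  show "x \<in> S2 \<longleftrightarrow> (\<forall>u\<in>U. 0 \<le> aa u x) \<and> 0 \<le> bb x / dl"
    using hull_weights(1)[OF ind2 fin sw vx] v2U by (auto simp: w_def)
  show "x \<in> rel_interior S2 \<longleftrightarrow> (\<forall>u\<in>U. 0 < aa u x) \<and> 0 < bb x / dl"
    using hull_weights(2)[OF ind2 fin sw vx] v2U by (auto simp: w_def)
qed

lemma indU: "\<not> affine_dependent U"
  using affine_independent_subset[OF ind1] by blast

lemma T_char:
  shows "x \<in> TT \<longleftrightarrow> bb x = 0 \<and> (\<forall>u\<in>U. 0 \<le> r u x)"
    and "x \<in> rel_interior TT \<longleftrightarrow> bb x = 0 \<and> (\<forall>u\<in>U. 0 < r u x)"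
proof -
  have nb: "bb x = 0" if xT: "x \<in> TT"
  proof -
    obtain w where w: "\<forall>s\<in>U. 0 \<le> w s" "sum w U = 1" "(\<Sum>s\<in>U. w s *\<^sub>R s) = x"
      using xT convex_hull_finite[OF finU] by auto
    have "x = v1 + (\<Sum>s\<in>U. w s *\<^sub>R (s - v1))" using shift_sum[OF w(2), of v1] w(3) by simp
    then have "\<forall>u\<in>U. w u = r u x" using uniq by blast
    then show ?thesis using w(2) unfolding bb_def by simp
  qed
  have main: "x \<in> TT \<longleftrightarrow> (\<forall>u\<in>U. 0 \<le> r u x)" "x \<in> rel_interior TT \<longleftrightarrow> (\<forall>u\<in>U. 0 < r u x)"
    if b0: "bb x = 0"
  proof -
    have sw: "sum (\<lambda>u. r u x) U = 1" using b0 unfolding bb_def by simp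
    have vx: "(\<Sum>u\<in>U. r u x *\<^sub>R u) = x" using shift_sum[OF sw, of v1] recon[of x] by simp
    show "x \<in> TT \<longleftrightarrow> (\<forall>u\<in>U. 0 \<le> r u x)" using hull_weights(1)[OF indU finU sw vx] .
    show "x \<in> rel_interior TT \<longleftrightarrow> (\<forall>u\<in>U. 0 < r u x)" using hull_weights(2)[OF indU finU sw vx] .
  qed
  show "x \<in> TT \<longleftrightarrow> bb x = 0 \<and> (\<forall>u\<in>U. 0 \<le> r u x)" using nb main by blast
  show "x \<in> rel_interior TT \<longleftrightarrow> bb x = 0 \<and> (\<forall>u\<in>U. 0 < r u x)"
    using nb main rel_interior_subset by blast
qed

lemma r_comb: "r u ((1 - e) *\<^sub>R a + e *\<^sub>R b) = (1 - e) * r u a + e * r u b"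
proof -
  have "(1 - e) *\<^sub>R a + e *\<^sub>R b - v1 = (1 - e) *\<^sub>R (a - v1) + e *\<^sub>R (b - v1)"
    by (simp add: algebra_simps)
  then show ?thesis unfolding r_def by (simp add: inner_simps)
qed

lemma dl_neg:
  assumes "S1 \<inter> S2 = TT"
  shows "dl < 0"
proof (rule ccontr)
  assume "\<not> dl < 0"
  then have dpos: "dl > 0" using dl_ne by simp
  define M where "M = (\<Sum>u\<in>U. \<bar>gam u\<bar>)"
  have M0: "M \<ge> 0" unfolding M_def by (simp add: sum_nonneg)
  define e where "e = 1 / (1 + nn * M)"
  have den: "1 + nn * M > 0" using nn_pos M0 by (simp add: add_pos_nonneg)
  have e0: "0 < e" "e \<le> 1" unfolding e_def using den nn_pos M0 by (auto simp: field_simps)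
  have ee: "e * (1 + nn * M) = 1" unfolding e_def using den by simp
  define x where "x = (1 - e) *\<^sub>R pp + e *\<^sub>R v2"
  have rx: "r u x = (1 - e) / nn + e * gam u" if "u \<in> U" for u
    unfolding x_def r_comb r_pp[OF that] gam_def by simp
  have "(\<Sum>u\<in>U. r u x) = (\<Sum>u\<in>U. (1 - e) / nn + e * gam u)" by (simp add: rx)
  also have "\<dots> = (1 - e) + e * (1 - dl)" using nn_pos
    by (simp add: sum.distrib sum_distrib_left[symmetric] sumgam nn_def)
  finally have bx: "bb x = e * dl" unfolding bb_def by (simp add: algebra_simps)
  have rpos: "0 \<le> r u x" if u: "u \<in> U" for u
  proof -
    have "\<bar>gam u\<bar> \<le> M" unfolding M_def using member_le_sum[OF u, of "\<lambda>u. \<bar>gam u\<bar>"] finU by simp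
    then have "- M \<le> gam u" by (simp add: abs_le_iff)
    then have "e * (- M) \<le> e * gam u" using e0 by (intro mult_left_mono) auto
    moreover have "1 - e = e * nn * M" using ee by (simp add: algebra_simps)
    then have "(1 - e) / nn = e * M" using nn_pos by simp
    ultimately show ?thesis using rx[OF u] by simp
  qed
  have x1: "x \<in> S1" using S1_char(1) rpos bx e0 dpos by simp
  have "bb pp = 0" unfolding bb_def using r_pp nn_pos by (simp add: nn_def)
  then have "pp \<in> TT" using T_char(1) r_pp nn_pos by simp
  then have "pp \<in> S2" using hull_mono[of U "insert v2 U"] by blast
  moreover have "v2 \<in> S2" by (simp add: hull_inc)
  ultimately have "x \<in> S2" unfolding x_def using convexD[OF convex_convex_hull, of pp _ v2 "1-e" e] e0 by simp
  with x1 assms have "x \<in> TT" by blast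
  then have "bb x = 0" using T_char(1) by blast
  then show False using bx e0 dpos by simp
qed

end

context cfg begin
context assumes dlneg: "dl < 0"
begin

lemma r_yy: "r u x = yy u x + ss x / nn" unfolding yy_def ss_def by simp
lemma bb_ss: "bb x = - ss x" unfolding ss_def by simp
lemma aa_yy: "aa u x = yy u x - ss x * hh u"
  unfolding aa_def yy_def ss_def hh_def using dl_ne nn_pos by (simp add: field_simps)

lemma S1c: "x \<in> S1 \<longleftrightarrow> (\<forall>u\<in>U. 0 \<le> yy u x + ss x / nn) \<and> ss x \<le> 0"
  using S1_char(1)[of x] by (simp add: r_yy bb_ss)
lemma S1ri: "x \<in> rel_interior S1 \<longleftrightarrow> (\<forall>u\<in>U. 0 < yy u x + ss x / nn) \<and> ss x < 0"
  using S1_char(2)[of x] by (simp add: r_yy bb_ss)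
lemma S2c: "x \<in> S2 \<longleftrightarrow> (\<forall>u\<in>U. 0 \<le> yy u x - ss x * hh u) \<and> 0 \<le> ss x"
proof -
  have "0 \<le> bb x / dl \<longleftrightarrow> 0 \<le> ss x" using dlneg by (auto simp: bb_ss divide_le_0_iff)
  then show ?thesis using S2_char(1)[of x] by (simp add: aa_yy)
qed
lemma S2ri: "x \<in> rel_interior S2 \<longleftrightarrow> (\<forall>u\<in>U. 0 < yy u x - ss x * hh u) \<and> 0 < ss x"
proof -
  have "0 < bb x / dl \<longleftrightarrow> 0 < ss x" using dlneg by (auto simp: bb_ss divide_less_0_iff)
  then show ?thesis using S2_char(2)[of x] by (simp add: aa_yy)
qed
lemma Tc: "x \<in> TT \<longleftrightarrow> ss x = 0 \<and> (\<forall>u\<in>U. 0 \<le> yy u x)"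
  using T_char(1)[of x] by (auto simp: r_yy bb_ss)
lemma Tri: "x \<in> rel_interior TT \<longleftrightarrow> ss x = 0 \<and> (\<forall>u\<in>U. 0 < yy u x)"
  using T_char(2)[of x] by (auto simp: r_yy bb_ss)

lemma xeq: "(\<forall>u\<in>U. yy u x = yy u x') \<Longrightarrow> ss x = ss x' \<Longrightarrow> x = x'"
proof -
  assume a: "\<forall>u\<in>U. yy u x = yy u x'" "ss x = ss x'"
  have "x = v1 + (\<Sum>u\<in>U. r u x *\<^sub>R (u - v1))" by (rule recon)
  also have "\<dots> = v1 + (\<Sum>u\<in>U. r u x' *\<^sub>R (u - v1))" using a by (simp add: r_yy)
  also have "\<dots> = x'" by (rule recon[symmetric])
  finally show ?thesis .
qed

lemma PPne: "PP \<noteq> {}"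
proof
  assume e: "PP = {}"
  have "(\<Sum>u\<in>U. hh u) = - (sum gam U) / dl - card U / nn"
    unfolding hh_def by (simp add: sum_subtractf sum_negf sum_divide_distrib[symmetric])
  also have "\<dots> = - 1 / dl" using nn_pos dl_ne by (simp add: sumgam nn_def field_simps)
  finally have "(\<Sum>u\<in>U. hh u) > 0" using dlneg by simp
  moreover have "\<forall>u\<in>U. hh u \<le> 0" using e unfolding PP_def by auto
  then have "(\<Sum>u\<in>U. hh u) \<le> 0" by (simp add: sum_nonpos)
  ultimately show False by simp
qed

lemma finPP: "finite PP" unfolding PP_def using finU by simp

lemma L1_le: "u \<in> U \<Longrightarrow> L1 x \<le> nn * yy u x"
  unfolding L1_def using nn_pos finU by (simp add: Min_le)
lemma L1_ex: "\<exists>u\<in>U. L1 x = nn * yy u x"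
proof -
  have "Min ((\<lambda>u. yy u x) ` U) \<in> (\<lambda>u. yy u x) ` U" using finU Une by (intro Min_in) auto
  then show ?thesis unfolding L1_def by auto
qed
lemma L2_le: "u \<in> PP \<Longrightarrow> L2 x \<le> yy u x / hh u"
  unfolding L2_def using finPP by (simp add: Min_le)
lemma L2_ex: "\<exists>u\<in>PP. L2 x = yy u x / hh u"
proof -
  have "Min ((\<lambda>u. yy u x / hh u) ` PP) \<in> (\<lambda>u. yy u x / hh u) ` PP" using finPP PPne by (intro Min_in) auto
  then show ?thesis unfolding L2_def by auto
qed

lemma L1_pos_yy: "0 < L1 x \<Longrightarrow> u \<in> U \<Longrightarrow> 0 < yy u x"
  using L1_le[of u x] nn_pos by (smt (verit) mult_pos_pos zero_less_mult_iff)
lemma L1_pos_L2: "0 < L1 x \<Longrightarrow> 0 < L2 x"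
proof -
  assume a: "0 < L1 x"
  obtain u where u: "u \<in> PP" "L2 x = yy u x / hh u" using L2_ex by blast
  then show ?thesis using L1_pos_yy[OF a] unfolding PP_def by auto
qed

lemma yy_cong: "\<forall>u\<in>U. yy u x = yy u x' \<Longrightarrow> L1 x = L1 x' \<and> L2 x = L2 x'"
  unfolding L1_def L2_def PP_def by (auto intro!: arg_cong[where f=Min] image_cong)

lemma key2: "\<forall>u\<in>U. 0 \<le> yy u x \<Longrightarrow> 0 \<le> ss x \<Longrightarrow>
    (\<forall>u\<in>U. 0 \<le> yy u x - ss x * hh u) \<longleftrightarrow> ss x \<le> L2 x"
proof
  assume y: "\<forall>u\<in>U. 0 \<le> yy u x" and s: "0 \<le> ss x"
  { assume h: "\<forall>u\<in>U. 0 \<le> yy u x - ss x * hh u"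
    obtain u where u: "u \<in> PP" "L2 x = yy u x / hh u" using L2_ex by blast
    then have "hh u > 0" "u \<in> U" unfolding PP_def by auto
    then show "ss x \<le> L2 x" using h u by (simp add: pos_le_divide_eq) }
  { assume l: "ss x \<le> L2 x"
    show "\<forall>u\<in>U. 0 \<le> yy u x - ss x * hh u"
    proof
      fix u assume u: "u \<in> U"
      show "0 \<le> yy u x - ss x * hh u"
      proof (cases "hh u > 0")
        case True
        then have "u \<in> PP" using u unfolding PP_def by auto
        then have "ss x \<le> yy u x / hh u" using L2_le l by (meson order_trans)
        then show ?thesis using True by (simp add: pos_le_divide_eq)
      next
        case False
        then have "ss x * hh u \<le> 0" using s by (simp add: mult_nonneg_nonpos)
        moreover have "0 \<le> yy u x" using y u by blast
        ultimately show ?thesis by linarith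
      qed
    qed }
qed

lemma yy_psi: "u \<in> U \<Longrightarrow> yy u (psi x) = yy u x" unfolding psi_def by (rule yy_shift)
lemma ss_psi: "ss (psi x) = ss x - Dl x" unfolding psi_def by (rule ss_shift)
lemma L_psi: "L1 (psi x) = L1 x" "L2 (psi x) = L2 x" using yy_cong[of "psi x" x] yy_psi by auto

lemma Dl0: "L1 x \<le> 0 \<Longrightarrow> Dl x = 0" unfolding Dl_def by simp
lemma Dlpos: "0 < L1 x \<Longrightarrow> Dl x = L1 x * (L2 x - ss x) / L2 x" unfolding Dl_def by simp

end
end

lemma ar_form: "(l::real) > 0 \<Longrightarrow> s - a * (l - s) / l = (s * (l + a) - a * l) / l"
  by (simp add: field_simps)
lemma ar_bounds: "(a::real) > 0 \<Longrightarrow> l > 0 \<Longrightarrow> 0 \<le> s \<Longrightarrow> s \<le> l \<Longrightarrow> 0 \<le> a * (l - s) / l \<and> a * (l - s) / l \<le> a"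
proof -
  assume h: "(a::real) > 0" "l > 0" "0 \<le> s" "s \<le> l"
  have "a * (l - s) \<le> a * l" using h by (simp add: mult_left_mono)
  then have "a * (l - s) / l \<le> a" using h by (simp add: divide_le_eq)
  moreover have "0 \<le> a * (l - s) / l" using h by simp
  ultimately show ?thesis by simp
qed
lemma ar_inj: "(a::real) > 0 \<Longrightarrow> l > 0 \<Longrightarrow> s - a * (l - s) / l = s' - a * (l - s') / l \<Longrightarrow> s = s'"
proof -
  assume h: "(a::real) > 0" "l > 0" "s - a * (l - s) / l = s' - a * (l - s') / l"
  then have "(s * (l + a) - a * l) / l = (s' * (l + a) - a * l) / l" by (simp add: ar_form)
  then have "s * (l + a) = s' * (l + a)" using h(2) by simp
  then show "s = s'" using h by simp
qed
lemma ar_zero: "(a::real) > 0 \<Longrightarrow> l > 0 \<Longrightarrow> 0 \<le> s \<Longrightarrow> (s - a * (l - s) / l = - a \<longleftrightarrow> s = 0) \<and> (s - a * (l - s) / l \<ge> - a)"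
proof -
  assume h: "(a::real) > 0" "l > 0" "0 \<le> s"
  have e: "s - a * (l - s) / l = s * (l + a) / l - a" using h by (simp add: ar_form diff_divide_distrib)
  have "s * (l + a) / l = 0 \<longleftrightarrow> s = 0" using h by simp
  moreover have "s * (l + a) / l \<ge> 0" using h by simp
  ultimately show ?thesis unfolding e by auto
qed
lemma ar_surj: "(a::real) > 0 \<Longrightarrow> l > 0 \<Longrightarrow> -a \<le> z \<Longrightarrow> z \<le> l \<Longrightarrow> t = a * (l - z) / (l + a) \<Longrightarrow>
   0 \<le> z + t \<and> z + t \<le> l \<and> a * (l - (z + t)) / l = t"
proof -
  assume h: "(a::real) > 0" "l > 0" "-a \<le> z" "z \<le> l" "t = a * (l - z) / (l + a)"
  have la: "l + a > 0" using h by simp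
  have zt: "z + t = l * (z + a) / (l + a)" using la h(5) by (simp add: field_simps)
  have "0 \<le> l * (z + a) / (l + a)" using h la by simp
  moreover have "l * (z + a) \<le> l * (l + a)" using h by (simp add: mult_left_mono)
  then have "l * (z + a) / (l + a) \<le> l" using la by (simp add: divide_le_eq)
  moreover have "l - l * (z + a) / (l + a) = l * (l - z) / (l + a)" using la by (simp add: field_simps)
  then have "a * (l - (z + t)) / l = t" using h la unfolding zt by simp
  ultimately show ?thesis unfolding zt by simp
qed
lemma ar_div: "(n::real) > 0 \<Longrightarrow> 0 \<le> n * y + s \<Longrightarrow> 0 \<le> y + s / n"
  by (simp add: field_simps)
lemma ar_divs: "(n::real) > 0 \<Longrightarrow> 0 < n * y + s \<Longrightarrow> 0 < y + s / n"
  by (simp add: field_simps)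

context cfg begin
context assumes dlneg: "dl < 0"
begin

lemma S2_facts: "x \<in> S2 \<Longrightarrow> 0 < L1 x \<Longrightarrow> (\<forall>u\<in>U. 0 < yy u x) \<and> 0 < L2 x \<and> 0 \<le> ss x \<and> ss x \<le> L2 x"
proof -
  assume x: "x \<in> S2" and a: "0 < L1 x"
  have y: "\<forall>u\<in>U. 0 < yy u x" using L1_pos_yy[OF dlneg a] by blast
  have s: "0 \<le> ss x" "\<forall>u\<in>U. 0 \<le> yy u x - ss x * hh u" using x S2c[OF dlneg] by auto
  have y0: "\<forall>u\<in>U. 0 \<le> yy u x" using y by (simp add: less_imp_le)
  have "ss x \<le> L2 x" using key2[OF dlneg y0 s(1)] s(2) by blast
  then show ?thesis using y s L1_pos_L2[OF dlneg a] by auto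
qed

lemma psi_in: "x \<in> S2 \<Longrightarrow> psi x \<in> S1 \<union> S2"
proof -
  assume x: "x \<in> S2"
  show ?thesis
  proof (cases "L1 x \<le> 0")
    case True
    then show ?thesis using x by (simp add: psi_def Dl0[OF dlneg])
  next
    case False
    then have a: "0 < L1 x" by simp
    note f = S2_facts[OF x a]
    define z where "z = psi x"
    have yz: "\<forall>u\<in>U. yy u z = yy u x" unfolding z_def using yy_psi[OF dlneg] by blast
    have sz: "ss z = ss x - Dl x" unfolding z_def by (rule ss_psi[OF dlneg])
    have Lz: "L1 z = L1 x" "L2 z = L2 x" unfolding z_def using L_psi[OF dlneg] by auto
    have db: "0 \<le> Dl x \<and> Dl x \<le> L1 x" using ar_bounds[OF a, of "L2 x" "ss x"] f Dlpos[OF dlneg a] by simp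
    show ?thesis
    proof (cases "0 \<le> ss z")
      case True
      have "ss z \<le> L2 z" using Lz sz db f by simp
      moreover have y0: "\<forall>u\<in>U. 0 \<le> yy u z" using yz f by (simp add: less_imp_le)
      ultimately have "\<forall>u\<in>U. 0 \<le> yy u z - ss z * hh u" using key2[OF dlneg y0 True] by blast
      then have "z \<in> S2" using S2c[OF dlneg] True by blast
      then show ?thesis unfolding z_def by blast
    next
      case False
      have "\<forall>u\<in>U. 0 \<le> yy u z + ss z / nn"
      proof
        fix u assume u: "u \<in> U"
        have "L1 x \<le> nn * yy u x" using L1_le[OF dlneg u] .
        then have "0 \<le> nn * yy u z + ss z" using yz u sz db f by simp
        then show "0 \<le> yy u z + ss z / nn" using ar_div nn_pos by blast
      qed
      then have "z \<in> S1" using S1c[OF dlneg] False by simp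
      then show ?thesis unfolding z_def by blast
    qed
  qed
qed

lemma psi_inj: "x \<in> S2 \<Longrightarrow> x' \<in> S2 \<Longrightarrow> psi x = psi x' \<Longrightarrow> x = x'"
proof -
  assume x: "x \<in> S2" and x': "x' \<in> S2" and e: "psi x = psi x'"
  have yq: "\<forall>u\<in>U. yy u x = yy u x'"
  proof
    fix u assume u: "u \<in> U"
    have "yy u x = yy u (psi x)" using yy_psi[OF dlneg u] by simp
    also have "\<dots> = yy u (psi x')" using e by simp
    also have "\<dots> = yy u x'" using yy_psi[OF dlneg u] by simp
    finally show "yy u x = yy u x'" .
  qed
  then have L: "L1 x = L1 x'" "L2 x = L2 x'" using yy_cong[OF dlneg] by auto
  have "ss x - Dl x = ss (psi x)" using ss_psi[OF dlneg] by simp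
  also have "\<dots> = ss (psi x')" using e by simp
  also have "\<dots> = ss x' - Dl x'" using ss_psi[OF dlneg] by simp
  finally have se: "ss x - Dl x = ss x' - Dl x'" .
  have "ss x = ss x'"
  proof (cases "L1 x \<le> 0")
    case True
    then have "Dl x = 0" "Dl x' = 0" using L Dl0[OF dlneg] by auto
    then show ?thesis using se by simp
  next
    case False
    then have a: "0 < L1 x" by simp
    have l: "0 < L2 x" using S2_facts[OF x a] by blast
    have d1: "Dl x = L1 x * (L2 x - ss x) / L2 x" using Dlpos[OF dlneg a] .
    have d2: "Dl x' = L1 x * (L2 x - ss x') / L2 x" using Dlpos[OF dlneg, of x'] a L by simp
    show ?thesis using ar_inj[OF a l] se unfolding d1 d2 by blast
  qed
  then show ?thesis using xeq[OF dlneg] yq by blast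
qed

lemma psi_surj: "z \<in> S1 \<union> S2 \<Longrightarrow> \<exists>x\<in>S2. psi x = z"
proof -
  assume z: "z \<in> S1 \<union> S2"
  show ?thesis
  proof (cases "L1 z \<le> 0")
    case True
    have "z \<in> S2"
    proof (cases "z \<in> S2")
      case False
      then have z1: "z \<in> S1" using z by blast
      then have c: "\<forall>u\<in>U. 0 \<le> yy u z + ss z / nn" "ss z \<le> 0" using S1c[OF dlneg] by auto
      obtain u0 where u0: "u0 \<in> U" "L1 z = nn * yy u0 z" using L1_ex[OF dlneg] by blast
      have "yy u0 z \<le> 0" using u0 True nn_pos by (simp add: mult_le_0_iff)
      moreover have "0 \<le> yy u0 z + ss z / nn" using c(1) u0 by blast
      ultimately have "0 \<le> ss z / nn" by linarith
      then have s0: "ss z = 0" using c(2) nn_pos by (simp add: zero_le_divide_iff)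
      then have "\<forall>u\<in>U. 0 \<le> yy u z - ss z * hh u" using c(1) by simp
      then show ?thesis using S2c[OF dlneg] s0 by simp
    qed
    then show ?thesis using True by (intro bexI[of _ z]) (simp_all add: psi_def Dl0[OF dlneg])
  next
    case False
    then have a: "0 < L1 z" by simp
    have y: "\<forall>u\<in>U. 0 < yy u z" using L1_pos_yy[OF dlneg a] by blast
    have l: "0 < L2 z" using L1_pos_L2[OF dlneg a] .
    have rng: "- L1 z \<le> ss z \<and> ss z \<le> L2 z"
    proof (cases "z \<in> S2")
      case True
      then show ?thesis using S2_facts[OF True a] a by auto
    next
      case False
      then have z1: "z \<in> S1" using z by blast
      then have c: "\<forall>u\<in>U. 0 \<le> yy u z + ss z / nn" "ss z \<le> 0" using S1c[OF dlneg] by auto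
      obtain u0 where u0: "u0 \<in> U" "L1 z = nn * yy u0 z" using L1_ex[OF dlneg] by blast
      have "0 \<le> yy u0 z + ss z / nn" using c u0 by blast
      then have "0 \<le> nn * yy u0 z + ss z" using nn_pos by (simp add: field_simps)
      then show ?thesis using u0 c(2) l by simp
    qed
    define t where "t = L1 z * (L2 z - ss z) / (L2 z + L1 z)"
    have ar: "0 \<le> ss z + t \<and> ss z + t \<le> L2 z \<and> L1 z * (L2 z - (ss z + t)) / L2 z = t"
      using ar_surj[OF a l _ _ t_def] rng by blast
    define x where "x = z + (- t) *\<^sub>R w0"
    have yx: "\<forall>u\<in>U. yy u x = yy u z" unfolding x_def using yy_shift by blast
    have sx: "ss x = ss z + t" unfolding x_def using ss_shift[of z "- t"] by simp
    have Lx: "L1 x = L1 z" "L2 x = L2 z" using yy_cong[OF dlneg] yx by auto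
    have y0: "\<forall>u\<in>U. 0 \<le> yy u x" using yx y by (simp add: less_imp_le)
    have s0: "0 \<le> ss x" using sx ar by simp
    have "ss x \<le> L2 x" using sx ar Lx by simp
    then have "\<forall>u\<in>U. 0 \<le> yy u x - ss x * hh u" using key2[OF dlneg y0 s0] by blast
    then have xS: "x \<in> S2" using S2c[OF dlneg] s0 by simp
    have "Dl x = L1 x * (L2 x - ss x) / L2 x" using Dlpos[OF dlneg, of x] Lx a by simp
    also have "\<dots> = t" using Lx sx ar by simp
    finally have "Dl x = t" .
    then have "psi x = z" unfolding psi_def x_def by simp
    then show ?thesis using xS by blast
  qed
qed

end
end

lemma cont_Min:
  fixes f :: "'i \<Rightarrow> 'x::topological_space \<Rightarrow> real"
  assumes "finite I" "I \<noteq> {}" "\<forall>i\<in>I. continuous_on S (f i)"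
  shows "continuous_on S (\<lambda>x. Min ((\<lambda>i. f i x) ` I))"
  using assms
proof (induction I rule: finite_ne_induct)
  case (singleton i)
  then show ?case by simp
next
  case (insert i F)
  have c1: "continuous_on S (f i)" using insert.prems by auto
  have c2: "continuous_on S (\<lambda>x. Min ((\<lambda>i. f i x) ` F))" using insert.IH insert.prems by auto
  have "continuous_on S (\<lambda>x. min (f i x) (Min ((\<lambda>i. f i x) ` F)))"
    using continuous_on_min[OF c1 c2] .
  moreover have "Min ((\<lambda>i. f i x) ` insert i F) = min (f i x) (Min ((\<lambda>i. f i x) ` F))" for x
    using insert by (simp add: Min_insert)
  ultimately show ?case by simp
qed

context cfg begin
context assumes dlneg: "dl < 0"
begin

lemma clo: "closure S1 = S1" "closure S2 = S2" "closure TT = TT"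
  using finU by (simp_all add: closure_closed compact_imp_closed finite_imp_compact_convex_hull)

lemma psi_S2pos: "x \<in> S2 \<Longrightarrow> 0 < L1 x \<Longrightarrow> 0 \<le> ss (psi x) \<Longrightarrow> psi x \<in> S2"
proof -
  assume x: "x \<in> S2" and a: "0 < L1 x" and sz0: "0 \<le> ss (psi x)"
  note f = S2_facts[OF dlneg x a]
  define z where "z = psi x"
  have yz: "\<forall>u\<in>U. yy u z = yy u x" unfolding z_def using yy_psi[OF dlneg] by blast
  have sz: "ss z = ss x - Dl x" unfolding z_def by (rule ss_psi[OF dlneg])
  have Lz: "L1 z = L1 x" "L2 z = L2 x" unfolding z_def using L_psi[OF dlneg] by auto
  have db: "0 \<le> Dl x \<and> Dl x \<le> L1 x" using ar_bounds[OF a, of "L2 x" "ss x"] f Dlpos[OF dlneg a] by simp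
  have "ss z \<le> L2 z" using Lz sz db f by simp
  moreover have y0: "\<forall>u\<in>U. 0 \<le> yy u z" using yz f by (simp add: less_imp_le)
  moreover have "0 \<le> ss z" using sz0 z_def by simp
  ultimately have "\<forall>u\<in>U. 0 \<le> yy u z - ss z * hh u" using key2[OF dlneg y0] by blast
  then show "psi x \<in> S2" using S2c[OF dlneg] sz0 z_def by simp
qed

lemma psi_D: "x \<in> S2 \<Longrightarrow> (psi x \<in> rel_interior S1 \<union> (S2 - rel_frontier TT) \<longleftrightarrow> x \<notin> TT)"
proof -
  assume x: "x \<in> S2"
  have rfT: "rel_frontier TT = TT - rel_interior TT" unfolding rel_frontier_def clo by simp
  define z where "z = psi x"
  have yz: "\<forall>u\<in>U. yy u z = yy u x" unfolding z_def using yy_psi[OF dlneg] by blast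
  have sz: "ss z = ss x - Dl x" unfolding z_def by (rule ss_psi[OF dlneg])
  have xs: "0 \<le> ss x" "\<forall>u\<in>U. 0 \<le> yy u x - ss x * hh u" using x S2c[OF dlneg] by auto
  have xT: "x \<in> TT \<longleftrightarrow> ss x = 0"
  proof
    assume "ss x = 0" then show "x \<in> TT" using xs Tc[OF dlneg] by simp
  qed (simp add: Tc[OF dlneg])
  obtain u0 where u0: "u0 \<in> U" "L1 x = nn * yy u0 x" using L1_ex[OF dlneg] by blast
  have "z \<in> rel_interior S1 \<union> (S2 - rel_frontier TT) \<longleftrightarrow> x \<notin> TT"
  proof (cases "L1 x \<le> 0")
    case True
    then have zx: "z = x" unfolding z_def psi_def using Dl0[OF dlneg] by simp
    show ?thesis
    proof (cases "ss x = 0")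
      case True
      have "\<not> (\<forall>u\<in>U. 0 < yy u x)"
      proof
        assume "\<forall>u\<in>U. 0 < yy u x"
        then have "0 < L1 x" using u0 nn_pos by simp
        then show False using \<open>L1 x \<le> 0\<close> by simp
      qed
      then have "z \<notin> rel_interior TT" using Tri[OF dlneg] zx by blast
      moreover have "z \<notin> rel_interior S1" using S1ri[OF dlneg] zx True by simp
      moreover have "z \<in> TT" using xT True zx by simp
      ultimately show ?thesis using rfT xT True by blast
    next
      case False
      then have "x \<notin> TT" using xT by simp
      moreover have "z \<notin> TT" using zx \<open>x \<notin> TT\<close> by simp
      moreover have "z \<in> S2" using zx x by simp
      ultimately show ?thesis using rfT by blast
    qed
  next
    case False
    then have a: "0 < L1 x" by simp
    note f = S2_facts[OF dlneg x a]
    have dd: "Dl x = L1 x * (L2 x - ss x) / L2 x" using Dlpos[OF dlneg a] .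
    have az: "(ss z = - L1 x \<longleftrightarrow> ss x = 0) \<and> - L1 x \<le> ss z"
      using ar_zero[of "L1 x" "L2 x" "ss x"] a f sz dd by simp
    show ?thesis
    proof (cases "ss x = 0")
      case True
      then have szz: "ss z = - L1 x" using az by simp
      have "z \<notin> S2" using S2c[OF dlneg] szz a by simp
      moreover have "z \<notin> rel_interior S1"
      proof
        assume "z \<in> rel_interior S1"
        then have "0 < yy u0 z + ss z / nn" using S1ri[OF dlneg] u0 by blast
        then show False using yz u0 szz nn_pos by simp
      qed
      ultimately show ?thesis using xT True by blast
    next
      case False
      then have nT: "x \<notin> TT" using xT by simp
      have gt: "- L1 x < ss z" using az False by linarith
      show ?thesis
      proof (cases "ss z < 0")
        case True
        have "\<forall>u\<in>U. 0 < yy u z + ss z / nn"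
        proof
          fix u assume u: "u \<in> U"
          have "L1 x \<le> nn * yy u x" using L1_le[OF dlneg u] .
          then have "0 < nn * yy u z + ss z" using yz u gt by simp
          then show "0 < yy u z + ss z / nn" using ar_divs nn_pos by blast
        qed
        then have "z \<in> rel_interior S1" using S1ri[OF dlneg] True by simp
        then show ?thesis using nT by blast
      next
        case False
        then have zS: "z \<in> S2" using psi_S2pos[OF x a] unfolding z_def by simp
        have "z \<notin> TT \<or> z \<in> rel_interior TT"
        proof (cases "ss z = 0")
          case True
          then have "z \<in> rel_interior TT" using Tri[OF dlneg] yz f by simp
          then show ?thesis by blast
        next
          case False
          then show ?thesis using Tc[OF dlneg] by blast
        qed
        then show ?thesis using zS nT rfT by blast
      qed
    qed
  qed
  then show ?thesis by (simp add: z_def)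
qed

lemma psi_fix: "x \<in> rel_frontier S2 - rel_interior TT \<Longrightarrow> psi x = x"
proof -
  assume "x \<in> rel_frontier S2 - rel_interior TT"
  then have x: "x \<in> S2" "x \<notin> rel_interior S2" "x \<notin> rel_interior TT"
    unfolding rel_frontier_def clo by auto
  show ?thesis
  proof (cases "L1 x \<le> 0")
    case True
    then show ?thesis unfolding psi_def using Dl0[OF dlneg] by simp
  next
    case False
    then have a: "0 < L1 x" by simp
    note f = S2_facts[OF dlneg x(1) a]
    have "ss x \<noteq> 0" using x(3) Tri[OF dlneg] f by auto
    then have sp: "0 < ss x" using f by simp
    have xs: "\<forall>u\<in>U. 0 \<le> yy u x - ss x * hh u" using x S2c[OF dlneg] by auto
    obtain u where u: "u \<in> U" "\<not> 0 < yy u x - ss x * hh u" using x(2) S2ri[OF dlneg] sp by auto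
    then have eq: "yy u x = ss x * hh u" using xs by force
    moreover have "0 < yy u x" using f u(1) by blast
    ultimately have "0 < ss x * hh u" by simp
    then have hp: "0 < hh u" using sp by (simp add: zero_less_mult_iff)
    then have "u \<in> PP" unfolding PP_def using u by simp
    then have "L2 x \<le> yy u x / hh u" by (rule L2_le[OF dlneg])
    also have "\<dots> = ss x" using eq hp by simp
    finally have "L2 x = ss x" using f by simp
    then have "Dl x = 0" using Dlpos[OF dlneg a] by simp
    then show ?thesis unfolding psi_def by simp
  qed
qed

end
end

context cfg begin
context assumes dlneg: "dl < 0"
begin

lemma cont_yy: "continuous_on UNIV (yy u)"
  unfolding yy_def[abs_def] bb_def r_def by (intro continuous_intros) (use nn_pos in auto)
lemma cont_ss: "continuous_on UNIV ss"
  unfolding ss_def[abs_def] bb_def r_def by (intro continuous_intros)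
lemma cont_L1: "continuous_on UNIV L1"
  unfolding L1_def[abs_def] using finU Une cont_yy by (intro continuous_intros cont_Min) auto
lemma cont_L2: "continuous_on UNIV L2"
proof -
  have "\<forall>u\<in>PP. continuous_on UNIV (\<lambda>x. yy u x / hh u)"
  proof
    fix u assume "u \<in> PP"
    then have "hh u \<noteq> 0" unfolding PP_def by auto
    then show "continuous_on UNIV (\<lambda>x. yy u x / hh u)" using cont_yy by (intro continuous_intros) auto
  qed
  then show ?thesis unfolding L2_def[abs_def] using finPP[OF dlneg] PPne[OF dlneg] by (intro cont_Min) auto
qed

lemma Dl_bound: "x \<in> S2 \<Longrightarrow> \<bar>Dl x\<bar> \<le> max 0 (L1 x)"
proof (cases "L1 x \<le> 0")
  case True
  then show ?thesis using Dl0[OF dlneg] by simp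
next
  case False
  assume x: "x \<in> S2"
  then have a: "0 < L1 x" using False by simp
  note f = S2_facts[OF dlneg x a]
  have "0 \<le> Dl x \<and> Dl x \<le> L1 x" using ar_bounds[OF a, of "L2 x" "ss x"] f Dlpos[OF dlneg a] by simp
  then show ?thesis by simp
qed

lemma cont_Dl: "continuous_on S2 Dl"
  unfolding continuous_on_def
proof
  fix x0 assume x0: "x0 \<in> S2"
  have t1: "(L1 \<longlongrightarrow> L1 x0) (at x0 within S2)"
    using continuous_on_subset[OF cont_L1, of S2] x0 unfolding continuous_on_def by blast
  have t2: "(L2 \<longlongrightarrow> L2 x0) (at x0 within S2)"
    using continuous_on_subset[OF cont_L2, of S2] x0 unfolding continuous_on_def by blast
  have t3: "(ss \<longlongrightarrow> ss x0) (at x0 within S2)"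
    using continuous_on_subset[OF cont_ss, of S2] x0 unfolding continuous_on_def by blast
  show "(Dl \<longlongrightarrow> Dl x0) (at x0 within S2)"
  proof (cases "L2 x0 = 0")
    case False
    have "((\<lambda>x. max 0 (L1 x) * (L2 x - ss x) / L2 x) \<longlongrightarrow> max 0 (L1 x0) * (L2 x0 - ss x0) / L2 x0) (at x0 within S2)"
      by (intro tendsto_intros t1 t2 t3 False)
    then show ?thesis unfolding Dl_def[abs_def] .
  next
    case True
    then have "\<not> 0 < L1 x0" using L1_pos_L2[OF dlneg] by force
    then have z: "Dl x0 = 0" "max 0 (L1 x0) = 0" using Dl0[OF dlneg] by auto
    have "((\<lambda>x. max 0 (L1 x)) \<longlongrightarrow> max 0 (L1 x0)) (at x0 within S2)"
      by (intro tendsto_intros t1)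
    then have g: "((\<lambda>x. max 0 (L1 x)) \<longlongrightarrow> 0) (at x0 within S2)" using z by simp
    have ev: "\<forall>\<^sub>F x in at x0 within S2. norm (Dl x) \<le> max 0 (L1 x)"
      unfolding eventually_at_filter by (intro always_eventually) (auto simp: Dl_bound)
    show ?thesis using Lim_null_comparison[OF ev g] z by simp
  qed
qed

lemma cont_psi: "continuous_on S2 psi"
  unfolding psi_def[abs_def] using cont_Dl by (intro continuous_intros)

end
end

lemmas poly_const = poly_fun.const
lemma poly_add: "poly_fun p \<Longrightarrow> poly_fun q \<Longrightarrow> poly_fun (\<lambda>x. p x + q x)" by (rule poly_fun.add)
lemma poly_mult: "poly_fun p \<Longrightarrow> poly_fun q \<Longrightarrow> poly_fun (\<lambda>x. p x * q x)" by (rule poly_fun.mult)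
lemma poly_diff: "poly_fun p \<Longrightarrow> poly_fun q \<Longrightarrow> poly_fun (\<lambda>x. p x - q x)"
proof -
  assume "poly_fun p" "poly_fun q"
  then have "poly_fun (\<lambda>x. p x + (-1) * q x)" by (intro poly_fun.intros)
  then show ?thesis by simp
qed
lemma poly_divc: "poly_fun p \<Longrightarrow> poly_fun (\<lambda>x. p x / c)"
proof -
  assume "poly_fun p"
  then have "poly_fun (\<lambda>x. p x * (1 / c))" by (intro poly_fun.intros)
  then show ?thesis by simp
qed
lemma poly_sum: "finite I \<Longrightarrow> (\<forall>i\<in>I. poly_fun (g i)) \<Longrightarrow> poly_fun (\<lambda>x. \<Sum>i\<in>I. g i x)"
proof (induction I rule: finite_induct)
  case empty
  then show ?case using poly_fun.const[of 0] by simp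
next
  case (insert i F)
  then show ?case by (simp add: poly_add)
qed
lemma poly_linear:
  fixes f :: "'a::euclidean_space \<Rightarrow> real"
  assumes "linear f"
  shows "poly_fun f"
proof -
  have e: "f x = (\<Sum>b\<in>Basis. (x \<bullet> b) * f b)" for x
  proof -
    have "f x = f (\<Sum>b\<in>Basis. (x \<bullet> b) *\<^sub>R b)" by (simp add: euclidean_representation)
    also have "\<dots> = (\<Sum>b\<in>Basis. (x \<bullet> b) * f b)"
      using assms by (simp add: linear_sum linear_scale)
    finally show ?thesis .
  qed
  have "poly_fun (\<lambda>x. \<Sum>b\<in>Basis. (x \<bullet> b) * f b)"
    by (intro poly_sum) (auto intro: poly_fun.intros)
  then show ?thesis using e by (metis (no_types, lifting) ext)
qed
lemma poly_fst_inner: "poly_fun (\<lambda>q. fst q \<bullet> (c::'a::euclidean_space))"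
  by (rule poly_linear) (intro linear_compose[OF linear_fst, unfolded o_def] bounded_linear.linear bounded_linear_inner_left)
lemma poly_snd_inner: "poly_fun (\<lambda>q. snd q \<bullet> (c::'a::euclidean_space))"
  by (rule poly_linear) (intro linear_compose[OF linear_snd, unfolded o_def] bounded_linear.linear bounded_linear_inner_left)
lemma poly_inner: "poly_fun (\<lambda>x. x \<bullet> (c::'a::euclidean_space))"
  by (rule poly_linear) (intro bounded_linear.linear bounded_linear_inner_left)

lemma sa_not: "semialgebraic {x. P x} \<Longrightarrow> semialgebraic {x. \<not> P x}"
proof -
  assume "semialgebraic {x. P x}"
  then have "semialgebraic (UNIV - {x. P x})" by (rule semialgebraic.compl)
  moreover have "UNIV - {x. P x} = {x. \<not> P x}" by auto
  ultimately show ?thesis by simp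
qed
lemma sa_disj: "semialgebraic {x. P x} \<Longrightarrow> semialgebraic {x. Q x} \<Longrightarrow> semialgebraic {x. P x \<or> Q x}"
proof -
  assume "semialgebraic {x. P x}" "semialgebraic {x. Q x}"
  then have "semialgebraic ({x. P x} \<union> {x. Q x})" by (rule semialgebraic.union)
  moreover have "{x. P x} \<union> {x. Q x} = {x. P x \<or> Q x}" by auto
  ultimately show ?thesis by simp
qed
lemma sa_conj: "semialgebraic {x. P x} \<Longrightarrow> semialgebraic {x. Q x} \<Longrightarrow> semialgebraic {x. P x \<and> Q x}"
proof -
  assume "semialgebraic {x. P x}" "semialgebraic {x. Q x}"
  then have "semialgebraic {x. \<not> (\<not> P x \<or> \<not> Q x)}" by (intro sa_not sa_disj)
  then show ?thesis by simp
qed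
lemma sa_eq: "poly_fun p \<Longrightarrow> poly_fun q \<Longrightarrow> semialgebraic {x. p x = q x}"
proof -
  assume "poly_fun p" "poly_fun q"
  then have "semialgebraic {x. p x - q x = 0}" by (intro semialgebraic.zero poly_diff)
  then show ?thesis by simp
qed
lemma sa_less: "poly_fun p \<Longrightarrow> poly_fun q \<Longrightarrow> semialgebraic {x. p x < q x}"
proof -
  assume "poly_fun p" "poly_fun q"
  then have "semialgebraic {x. 0 < q x - p x}" by (intro semialgebraic.pos poly_diff)
  then show ?thesis by simp
qed
lemma sa_le: "poly_fun p \<Longrightarrow> poly_fun q \<Longrightarrow> semialgebraic {x. p x \<le> q x}"
proof -
  assume "poly_fun p" "poly_fun q"
  then have "semialgebraic {x. p x < q x \<or> p x = q x}" by (intro sa_disj sa_less sa_eq)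
  then show ?thesis by (simp add: le_less)
qed
lemma sa_true: "semialgebraic {x::'a::euclidean_space. True}"
proof -
  have "semialgebraic {x::'a. (0::real) = 0}" by (intro sa_eq poly_fun.const)
  then show ?thesis by simp
qed
lemma sa_false: "semialgebraic {x::'a::euclidean_space. False}"
  using sa_not[OF sa_true] by simp
lemma sa_ball: "finite I \<Longrightarrow> (\<forall>i\<in>I. semialgebraic {x. P i x}) \<Longrightarrow> semialgebraic {x. \<forall>i\<in>I. P i x}"
proof (induction I rule: finite_induct)
  case empty
  then show ?case using sa_true by simp
next
  case (insert i F)
  then have "semialgebraic {x. P i x \<and> (\<forall>i\<in>F. P i x)}" by (intro sa_conj) auto
  then show ?case by simp
qed
lemma sa_bex: "finite I \<Longrightarrow> (\<forall>i\<in>I. semialgebraic {x. P i x}) \<Longrightarrow> semialgebraic {x. \<exists>i\<in>I. P i x}"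
proof (induction I rule: finite_induct)
  case empty
  then show ?case using sa_false by simp
next
  case (insert i F)
  then have "semialgebraic {x. P i x \<or> (\<exists>i\<in>F. P i x)}" by (intro sa_disj) auto
  then show ?case by simp
qed

context cfg begin

lemma poly_r: "linear g \<Longrightarrow> poly_fun (\<lambda>q. r u (g q))"
proof -
  assume g: "linear g"
  have "poly_fun (\<lambda>q. g q \<bullet> cc u)"
    by (rule poly_linear) (intro linear_compose[OF g, unfolded o_def] bounded_linear.linear bounded_linear_inner_left)
  then have "poly_fun (\<lambda>q. g q \<bullet> cc u - v1 \<bullet> cc u)" by (intro poly_diff poly_const)
  then show ?thesis unfolding r_def by (simp add: inner_diff_left)
qed
lemma poly_bb: "linear g \<Longrightarrow> poly_fun (\<lambda>q. bb (g q))"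
  unfolding bb_def using finU by (intro poly_diff poly_const poly_sum ballI poly_r)
lemma poly_yy: "linear g \<Longrightarrow> poly_fun (\<lambda>q. yy u (g q))"
  unfolding yy_def by (intro poly_add poly_divc poly_r poly_bb)
lemma poly_ss: "linear g \<Longrightarrow> poly_fun (\<lambda>q. ss (g q))"
proof -
  assume g: "linear g"
  have "poly_fun (\<lambda>q. 0 - bb (g q))" by (intro poly_diff poly_const poly_bb g)
  then show ?thesis unfolding ss_def by simp
qed

lemma linid: "linear (\<lambda>x::'a. x)" by (rule linear_ident)
lemma linfst: "linear (fst :: 'a \<times> 'a \<Rightarrow> 'a)" by (rule linear_fst)

context assumes dlneg: "dl < 0"
begin

lemma sa_S2: "semialgebraic S2"
proof -
  have "S2 = {x. (\<forall>u\<in>U. yy u x - ss x * hh u \<ge> 0) \<and> 0 \<le> ss x}" using S2c[OF dlneg] by auto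
  moreover have "semialgebraic {x. (\<forall>u\<in>U. 0 \<le> yy u x - ss x * hh u) \<and> 0 \<le> ss x}"
    using finU by (intro sa_conj sa_ball ballI sa_le poly_const poly_diff poly_mult poly_yy[OF linid] poly_ss[OF linid])
  ultimately show ?thesis by simp
qed


lemma L1_eq: "i \<in> U \<Longrightarrow> \<forall>u\<in>U. yy i x \<le> yy u x \<Longrightarrow> L1 x = nn * yy i x"
  unfolding L1_def using finU by (subst Min_eqI) auto
lemma L2_eq: "j \<in> PP \<Longrightarrow> \<forall>u\<in>PP. yy j x / hh j \<le> yy u x / hh u \<Longrightarrow> L2 x = yy j x / hh j"
  unfolding L2_def using finPP[OF dlneg] by (subst Min_eqI) auto

lemma psi_coord: "psi x \<bullet> b = x \<bullet> b + Dl x * (w0 \<bullet> b)"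
  unfolding psi_def by (simp add: inner_add_left)

lemma psi_eq_iff: "z = psi x \<longleftrightarrow> (\<exists>i\<in>U. \<exists>j\<in>PP. (\<forall>u\<in>U. yy i x \<le> yy u x) \<and> (\<forall>u\<in>PP. yy j x / hh j \<le> yy u x / hh u) \<and>
    ((nn * yy i x \<le> 0 \<and> (\<forall>b\<in>Basis. z \<bullet> b = x \<bullet> b)) \<or>
     (0 < nn * yy i x \<and> (\<forall>b\<in>Basis. (z \<bullet> b - x \<bullet> b) * (yy j x / hh j) = nn * yy i x * (yy j x / hh j - ss x) * (w0 \<bullet> b)))))"
  (is "_ \<longleftrightarrow> (\<exists>i\<in>U. \<exists>j\<in>PP. ?m1 i \<and> ?m2 j \<and> ?c i j)")
proof
  assume z: "z = psi x"
  obtain i where i: "i \<in> U" "L1 x = nn * yy i x" using L1_ex[OF dlneg] by blast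
  obtain j where j: "j \<in> PP" "L2 x = yy j x / hh j" using L2_ex[OF dlneg] by blast
  have m1: "?m1 i"
  proof
    fix u assume "u \<in> U"
    then have "nn * yy i x \<le> nn * yy u x" using L1_le[OF dlneg] i by metis
    then show "yy i x \<le> yy u x" using nn_pos by simp
  qed
  have m2: "?m2 j" using L2_le[OF dlneg] j by metis
  have "?c i j"
  proof (cases "L1 x \<le> 0")
    case True
    then show ?thesis using i z psi_coord Dl0[OF dlneg] by simp
  next
    case False
    then have a: "0 < L1 x" by simp
    have l: "0 < L2 x" using L1_pos_L2[OF dlneg a] .
    have d: "Dl x * L2 x = L1 x * (L2 x - ss x)" using Dlpos[OF dlneg a] l by simp
    have "\<forall>b\<in>Basis. (z \<bullet> b - x \<bullet> b) * L2 x = L1 x * (L2 x - ss x) * (w0 \<bullet> b)"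
    proof
      fix b :: 'a
      have "(z \<bullet> b - x \<bullet> b) * L2 x = (Dl x * L2 x) * (w0 \<bullet> b)" using z psi_coord by simp
      then show "(z \<bullet> b - x \<bullet> b) * L2 x = L1 x * (L2 x - ss x) * (w0 \<bullet> b)" using d by simp
    qed
    then show ?thesis using a i j by simp
  qed
  then show "\<exists>i\<in>U. \<exists>j\<in>PP. ?m1 i \<and> ?m2 j \<and> ?c i j" using i j m1 m2 by blast
next
  assume "\<exists>i\<in>U. \<exists>j\<in>PP. ?m1 i \<and> ?m2 j \<and> ?c i j"
  then obtain i j where ij: "i \<in> U" "j \<in> PP" "?m1 i" "?m2 j" "?c i j" by blast
  have L1e: "L1 x = nn * yy i x" using L1_eq ij by blast
  have L2e: "L2 x = yy j x / hh j" using L2_eq ij by blast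
  show "z = psi x"
  proof (rule euclidean_eqI)
    fix b :: 'a assume b: "b \<in> Basis"
    show "z \<bullet> b = psi x \<bullet> b"
    proof (cases "L1 x \<le> 0")
      case True
      then show ?thesis using ij(5) b L1e psi_coord Dl0[OF dlneg] nn_pos by auto
    next
      case False
      then have a: "0 < L1 x" by simp
      have l: "0 < L2 x" using L1_pos_L2[OF dlneg a] .
      have "(z \<bullet> b - x \<bullet> b) * L2 x = L1 x * (L2 x - ss x) * (w0 \<bullet> b)"
        using ij(5) b L1e L2e a by auto
      moreover have d: "Dl x * L2 x = L1 x * (L2 x - ss x)" using Dlpos[OF dlneg a] l by simp
      ultimately have "(z \<bullet> b - x \<bullet> b) * L2 x = (Dl x * (w0 \<bullet> b)) * L2 x" by (simp add: ac_simps)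
      then have "z \<bullet> b - x \<bullet> b = Dl x * (w0 \<bullet> b)" using l by simp
      then have "z \<bullet> b = x \<bullet> b + Dl x * (w0 \<bullet> b)" by simp
      then show ?thesis using psi_coord by simp
    qed
  qed
qed

lemma sa_graph: "semialgebraic ((\<lambda>x. (x, psi x)) ` S2)"
proof -
  have "(\<lambda>x. (x, psi x)) ` S2 = {q. fst q \<in> S2 \<and> snd q = psi (fst q)}" by force
  also have "\<dots> = {q. ((\<forall>u\<in>U. 0 \<le> yy u (fst q) - ss (fst q) * hh u) \<and> 0 \<le> ss (fst q)) \<and>
    (\<exists>i\<in>U. \<exists>j\<in>PP. (\<forall>u\<in>U. yy i (fst q) \<le> yy u (fst q)) \<and> (\<forall>u\<in>PP. yy j (fst q) / hh j \<le> yy u (fst q) / hh u) \<and>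
    ((nn * yy i (fst q) \<le> 0 \<and> (\<forall>b\<in>Basis. snd q \<bullet> b = fst q \<bullet> b)) \<or>
     (0 < nn * yy i (fst q) \<and> (\<forall>b\<in>Basis. (snd q \<bullet> b - fst q \<bullet> b) * (yy j (fst q) / hh j) = nn * yy i (fst q) * (yy j (fst q) / hh j - ss (fst q)) * (w0 \<bullet> b)))))}"
    using S2c[OF dlneg] psi_eq_iff by blast
  finally have e: "(\<lambda>x. (x, psi x)) ` S2 = \<dots>" .
  have "semialgebraic {q. ((\<forall>u\<in>U. 0 \<le> yy u (fst q) - ss (fst q) * hh u) \<and> 0 \<le> ss (fst q)) \<and>
    (\<exists>i\<in>U. \<exists>j\<in>PP. (\<forall>u\<in>U. yy i (fst q) \<le> yy u (fst q)) \<and> (\<forall>u\<in>PP. yy j (fst q) / hh j \<le> yy u (fst q) / hh u) \<and>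
    ((nn * yy i (fst q) \<le> 0 \<and> (\<forall>b\<in>Basis. snd q \<bullet> b = fst q \<bullet> b)) \<or>
     (0 < nn * yy i (fst q) \<and> (\<forall>b\<in>Basis. (snd q \<bullet> b - fst q \<bullet> b) * (yy j (fst q) / hh j) = nn * yy i (fst q) * (yy j (fst q) / hh j - ss (fst q)) * (w0 \<bullet> b)))))}"
    using finU finPP[OF dlneg]
    by (intro sa_conj sa_disj sa_ball sa_bex ballI finite_Basis sa_le sa_less sa_eq poly_const poly_diff poly_mult poly_divc
        poly_yy[OF linfst] poly_ss[OF linfst] poly_fst_inner poly_snd_inner) auto
  then show ?thesis using e by simp
qed

end
end

theorem mainTheorem12:
  fixes \<sigma>1 \<sigma>2 \<tau> :: "'a::euclidean_space set"
  assumes "int DIM('a) simplex \<sigma>1"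
    and "int DIM('a) simplex \<sigma>2"
    and "\<tau> facet_of \<sigma>1" and "\<tau> facet_of \<sigma>2"
    and "\<sigma>1 \<inter> \<sigma>2 = \<tau>"
  shows "\<exists>\<psi> \<phi>. homeomorphism \<sigma>2 (\<sigma>1 \<union> \<sigma>2) \<psi> \<phi>
           \<and> semialgebraic_map \<sigma>2 \<psi>
           \<and> \<psi> ` (\<sigma>2 - \<tau>) = rel_interior \<sigma>1 \<union> (\<sigma>2 - rel_frontier \<tau>)
           \<and> (\<forall>x \<in> rel_frontier \<sigma>2 - rel_interior \<tau>. \<psi> x = x)"
proof -
  obtain C1 where C1: "\<not> affine_dependent C1" "int (card C1) = int DIM('a) + 1" "\<sigma>1 = convex hull C1"
    using assms(1) unfolding simplex_def by blast
  obtain C2 where C2: "\<not> affine_dependent C2" "int (card C2) = int DIM('a) + 1" "\<sigma>2 = convex hull C2"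
    using assms(2) unfolding simplex_def by blast
  obtain v1 where v1: "v1 \<in> C1" "\<tau> = convex hull (C1 - {v1})"
    using assms(3) C1 facet_of_convex_hull_affine_independent by blast
  obtain v2 where v2: "v2 \<in> C2" "\<tau> = convex hull (C2 - {v2})"
    using assms(4) C2 facet_of_convex_hull_affine_independent by blast
  have fC1: "finite C1" using C1(1) aff_independent_finite by blast
  have fC2: "finite C2" using C2(1) aff_independent_finite by blast
  have i1: "\<not> affine_dependent (C1 - {v1})" using C1(1) affine_independent_subset by blast
  have i2: "\<not> affine_dependent (C2 - {v2})" using C2(1) affine_independent_subset by blast
  have U12: "C1 - {v1} = C2 - {v2}"
  proof -
    have "x \<in> C1 - {v1} \<longleftrightarrow> x extreme_point_of \<tau>" for x
      using extreme_point_of_convex_hull_affine_independent[OF i1] v1 by simp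
    moreover have "x \<in> C2 - {v2} \<longleftrightarrow> x extreme_point_of \<tau>" for x
      using extreme_point_of_convex_hull_affine_independent[OF i2] v2 by simp
    ultimately show ?thesis by blast
  qed
  define U where "U = C1 - {v1}"
  have e1: "insert v1 U = C1" unfolding U_def using v1 by auto
  have e2: "insert v2 U = C2" unfolding U_def U12 using v2 by auto
  have cU: "card U = DIM('a)" unfolding U_def using C1(2) fC1 v1(1) by (simp add: card_Diff_singleton)
  have fU: "finite U" unfolding U_def using fC1 by simp
  have n1: "v1 \<notin> U" unfolding U_def by simp
  have n2: "v2 \<notin> U" unfolding U_def U12 by simp
  have a1: "\<not> affine_dependent (insert v1 U)" using e1 C1(1) by simp
  have a2: "\<not> affine_dependent (insert v2 U)" using e2 C2(1) by simp
  interpret cfg U v1 v2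
    using fU cU n1 n2 a1 a2 by unfold_locales
  have s1: "\<sigma>1 = S1" using C1 e1 by simp
  have s2: "\<sigma>2 = S2" using C2 e2 by simp
  have t: "\<tau> = TT" using v1 U_def by simp
  have dlneg: "dl < 0" using dl_neg assms(5) s1 s2 t by simp
  have "compact S2" using finU by (simp add: finite_imp_compact_convex_hull)
  moreover have "psi ` S2 = S1 \<union> S2" using psi_in[OF dlneg] psi_surj[OF dlneg] by blast
  moreover have "inj_on psi S2" using psi_inj[OF dlneg] by (auto simp: inj_on_def)
  ultimately obtain g where hom: "homeomorphism S2 (S1 \<union> S2) psi g"
    using homeomorphism_compact cont_psi[OF dlneg] by blast
  have sam: "semialgebraic_map S2 psi"
    unfolding semialgebraic_map_def using sa_S2[OF dlneg] sa_graph[OF dlneg] by blast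
  have img: "psi ` (S2 - TT) = rel_interior S1 \<union> (S2 - rel_frontier TT)"
  proof
    show "psi ` (S2 - TT) \<subseteq> rel_interior S1 \<union> (S2 - rel_frontier TT)"
      using psi_D[OF dlneg] by blast
    show "rel_interior S1 \<union> (S2 - rel_frontier TT) \<subseteq> psi ` (S2 - TT)"
    proof
      fix z assume z: "z \<in> rel_interior S1 \<union> (S2 - rel_frontier TT)"
      then have "z \<in> S1 \<union> S2" using rel_interior_subset by blast
      then obtain x where x: "x \<in> S2" "psi x = z" using psi_surj[OF dlneg] by blast
      then have "x \<notin> TT" using psi_D[OF dlneg x(1)] z by simp
      then show "z \<in> psi ` (S2 - TT)" using x by blast
    qed
  qed
  have fx: "\<forall>x \<in> rel_frontier S2 - rel_interior TT. psi x = x" using psi_fix[OF dlneg] by blast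
  show ?thesis unfolding s1 s2 t using hom sam img fx by blast
qed

end
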